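(* Let $A$ be an operator algebra with a right contractive approximate identity which has property $(\mathcal R)$. Then $\mathcal R(A)$ is a norm closed right ideal of $A$ (hence an operator algebra) with a two-sided contractive approximate identity. Moreover $\mathcal R(A)$ does not depend on the particular right contractive approximate identity witnessing property $(\mathcal R)$ used to define it. Also $A\,\mathcal R(A)=A$ and $\mathcal R(A)\,A=\mathcal R(A)$. The analogous statements hold for property $(\mathcal L)$ and $\mathcal L(A)$ (with left and right interchanged).
   Context: An operator algebra is a (complete) algebra with matrix norms completely isometrically isomorphic, via a homomorphism, to a closed subalgebra of some $B(H)$. A right (left) contractive approximate identity is a net $\{e_\alpha\}$ in the unit ball with $ae_\alpha\to a$ ($e_\alpha a\to a$) for all $a$. $A$ has property $(\mathcal R)$ if there is a right contractive approximate identity $\{e_\alpha\}$ with $e_\alpha e_{\alpha'}\to e_{\alpha'}$ (limit in $\alpha$) for each fixed $\alpha'$; then $\mathcal R(A)=\{x\in A: e_\alpha x\to x\}$. Property $(\mathcal L)$: a left contractive approximate identity with $e_{\alpha'}e_\alpha\to e_{\alpha'}$ for each fixed $\alpha'$; $\mathcal L(A)=\{x\in A: xe_\alpha\to x\}$. For subsets $X,Y$, $XY$ denotes the norm closure of the span of products $xy$. *)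

theory Defs
  imports "HOL-Analysis.Analysis"
begin

text \<open>A complex Hilbert space is modelled as a real Hilbert space 'h
  together with a complex structure J (multiplication by i):
  J is a real-linear isometry-preserving-inner-product with J o J = -1.
  The complex inner product is recovered from the real one.\<close>

definition complex_structure :: "('h::{real_inner,complete_space} \<Rightarrow>\<^sub>L 'h) \<Rightarrow> bool" where
  "complex_structure J \<longleftrightarrow> J o\<^sub>L J = - id_blinfun \<and> (\<forall>x y. inner (J x) (J y) = inner x y)"

text \<open>B(H): the complex-linear bounded operators, i.e. those commuting with J.\<close>
definition cops :: "('h::{real_inner,complete_space} \<Rightarrow>\<^sub>L 'h) \<Rightarrow> ('h \<Rightarrow>\<^sub>L 'h) set" where
  "cops J = {T. T o\<^sub>L J = J o\<^sub>L T}"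

text \<open>complex linear span: real span of S and i*S\<close>
definition cspan :: "('h::{real_inner,complete_space} \<Rightarrow>\<^sub>L 'h) \<Rightarrow> ('h \<Rightarrow>\<^sub>L 'h) set \<Rightarrow> ('h \<Rightarrow>\<^sub>L 'h) set" where
  "cspan J S = span (S \<union> (\<lambda>T. J o\<^sub>L T) ` S)"

definition csubspace :: "('h::{real_inner,complete_space} \<Rightarrow>\<^sub>L 'h) \<Rightarrow> ('h \<Rightarrow>\<^sub>L 'h) set \<Rightarrow> bool" where
  "csubspace J S \<longleftrightarrow> subspace S \<and> (\<forall>T\<in>S. J o\<^sub>L T \<in> S)"

definition operator_algebra :: "('h::{real_inner,complete_space} \<Rightarrow>\<^sub>L 'h) \<Rightarrow> ('h \<Rightarrow>\<^sub>L 'h) set \<Rightarrow> bool" where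
  "operator_algebra J A \<longleftrightarrow> complex_structure J \<and> A \<subseteq> cops J \<and> csubspace J A \<and> closed A
     \<and> (\<forall>S\<in>A. \<forall>T\<in>A. S o\<^sub>L T \<in> A)"

definition setprod :: "('h::{real_inner,complete_space} \<Rightarrow>\<^sub>L 'h) \<Rightarrow> ('h \<Rightarrow>\<^sub>L 'h) set \<Rightarrow> ('h \<Rightarrow>\<^sub>L 'h) set \<Rightarrow> ('h \<Rightarrow>\<^sub>L 'h) set" where
  "setprod J X Y = closure (cspan J {x o\<^sub>L y | x y. x \<in> X \<and> y \<in> Y})"

text \<open>Nets: a function e on an index type together with a proper filter F
  (e.g. at_top of a directed set).\<close>
definition right_cai :: "('h::{real_inner,complete_space} \<Rightarrow>\<^sub>L 'h) set \<Rightarrow> 'i filter \<Rightarrow> ('i \<Rightarrow> ('h \<Rightarrow>\<^sub>L 'h)) \<Rightarrow> bool" where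
  "right_cai A F e \<longleftrightarrow> F \<noteq> bot \<and> (\<forall>i. e i \<in> A \<and> norm (e i) \<le> 1)
     \<and> (\<forall>a\<in>A. ((\<lambda>i. a o\<^sub>L e i) \<longlongrightarrow> a) F)"

definition left_cai :: "('h::{real_inner,complete_space} \<Rightarrow>\<^sub>L 'h) set \<Rightarrow> 'i filter \<Rightarrow> ('i \<Rightarrow> ('h \<Rightarrow>\<^sub>L 'h)) \<Rightarrow> bool" where
  "left_cai A F e \<longleftrightarrow> F \<noteq> bot \<and> (\<forall>i. e i \<in> A \<and> norm (e i) \<le> 1)
     \<and> (\<forall>a\<in>A. ((\<lambda>i. e i o\<^sub>L a) \<longlongrightarrow> a) F)"

definition two_sided_cai :: "('h::{real_inner,complete_space} \<Rightarrow>\<^sub>L 'h) set \<Rightarrow> 'i filter \<Rightarrow> ('i \<Rightarrow> ('h \<Rightarrow>\<^sub>L 'h)) \<Rightarrow> bool" where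
  "two_sided_cai A F e \<longleftrightarrow> right_cai A F e \<and> left_cai A F e"

definition propR :: "('h::{real_inner,complete_space} \<Rightarrow>\<^sub>L 'h) set \<Rightarrow> 'i filter \<Rightarrow> ('i \<Rightarrow> ('h \<Rightarrow>\<^sub>L 'h)) \<Rightarrow> bool" where
  "propR A F e \<longleftrightarrow> right_cai A F e \<and> (\<forall>j. ((\<lambda>i. e i o\<^sub>L e j) \<longlongrightarrow> e j) F)"

definition propL :: "('h::{real_inner,complete_space} \<Rightarrow>\<^sub>L 'h) set \<Rightarrow> 'i filter \<Rightarrow> ('i \<Rightarrow> ('h \<Rightarrow>\<^sub>L 'h)) \<Rightarrow> bool" where
  "propL A F e \<longleftrightarrow> left_cai A F e \<and> (\<forall>j. ((\<lambda>i. e j o\<^sub>L e i) \<longlongrightarrow> e j) F)"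

definition RR :: "('h::{real_inner,complete_space} \<Rightarrow>\<^sub>L 'h) set \<Rightarrow> 'i filter \<Rightarrow> ('i \<Rightarrow> ('h \<Rightarrow>\<^sub>L 'h)) \<Rightarrow> ('h \<Rightarrow>\<^sub>L 'h) set" where
  "RR A F e = {x\<in>A. ((\<lambda>i. e i o\<^sub>L x) \<longlongrightarrow> x) F}"

definition LL :: "('h::{real_inner,complete_space} \<Rightarrow>\<^sub>L 'h) set \<Rightarrow> 'i filter \<Rightarrow> ('i \<Rightarrow> ('h \<Rightarrow>\<^sub>L 'h)) \<Rightarrow> ('h \<Rightarrow>\<^sub>L 'h) set" where
  "LL A F e = {x\<in>A. ((\<lambda>i. x o\<^sub>L e i) \<longlongrightarrow> x) F}"

definition right_ideal :: "('h::{real_inner,complete_space} \<Rightarrow>\<^sub>L 'h) \<Rightarrow> ('h \<Rightarrow>\<^sub>L 'h) set \<Rightarrow> ('h \<Rightarrow>\<^sub>L 'h) set \<Rightarrow> bool" where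
  "right_ideal J A R \<longleftrightarrow> R \<subseteq> A \<and> csubspace J R \<and> (\<forall>x\<in>R. \<forall>a\<in>A. x o\<^sub>L a \<in> R)"

definition left_ideal :: "('h::{real_inner,complete_space} \<Rightarrow>\<^sub>L 'h) \<Rightarrow> ('h \<Rightarrow>\<^sub>L 'h) set \<Rightarrow> ('h \<Rightarrow>\<^sub>L 'h) set \<Rightarrow> bool" where
  "left_ideal J A R \<longleftrightarrow> R \<subseteq> A \<and> csubspace J R \<and> (\<forall>x\<in>R. \<forall>a\<in>A. a o\<^sub>L x \<in> R)"

end

theory Submission
  imports Defs
begin


lemma parallelogram_le:
  fixes a b :: "'h::real_inner"
  shows "(norm (a - b))^2 = 2*(norm a)^2 + 2*(norm b)^2 - (norm (a + b))^2"
  by (simp add: power2_norm_eq_inner inner_add_left inner_add_right inner_diff_left inner_diff_right inner_commute)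

lemma riesz:
  fixes \<phi> :: "'h::{real_inner,complete_space} \<Rightarrow> real"
  assumes bl: "bounded_linear \<phi>"
  shows "\<exists>z. \<forall>x. \<phi> x = inner x z"
proof (cases "\<forall>x. \<phi> x = 0")
  case True then show ?thesis by (intro exI[of _ 0]) simp
next
  case False
  interpret bounded_linear \<phi> by (rule bl)
  from False obtain x1 where "\<phi> x1 \<noteq> 0" by blast
  define x0 where "x0 = (1 / \<phi> x1) *\<^sub>R x1"
  have x0: "\<phi> x0 = 1" using \<open>\<phi> x1 \<noteq> 0\<close> by (simp add: x0_def scale)
  define M where "M = {x. \<phi> x = 1}"
  define d where "d = Inf (norm ` M)"
  have Mne: "norm ` M \<noteq> {}" using x0 M_def by auto
  have bdd: "bdd_below (norm ` M)" by (intro bdd_belowI[of _ 0]) auto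
  have dle: "d \<le> norm x" if "x \<in> M" for x
    unfolding d_def using that bdd by (intro cInf_lower) auto
  have d0: "0 \<le> d" unfolding d_def using Mne by (intro cInf_greatest) auto
  have "\<exists>m. m \<in> M \<and> norm m < d + 1 / real (Suc k)" for k
  proof -
    have "Inf (norm ` M) < d + 1 / real (Suc k)" unfolding d_def by simp
    from cInf_lessD[OF Mne this] show ?thesis by auto
  qed
  then obtain m where mM: "\<And>k. m k \<in> M" and mn: "\<And>k. norm (m k) < d + 1 / real (Suc k)"
    by metis
  define K where "K = 2*d + 1"
  have K0: "K > 0" using d0 K_def by simp
  have msq: "(norm (m k))^2 \<le> d^2 + K / real (Suc k)" for k
  proof -
    have a: "0 \<le> norm (m k)" by simp
    have "(norm (m k))^2 \<le> (d + 1 / real (Suc k))^2"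
      using mn[of k] a by (intro power_mono) auto
    also have "\<dots> = d^2 + (2*d + 1 / real (Suc k)) * (1 / real (Suc k))"
      by (simp only: power2_eq_square distrib_left distrib_right) (simp add: algebra_simps)
    also have "\<dots> = d^2 + (2*d + 1 / real (Suc k)) / real (Suc k)"
      by simp
    also have "\<dots> \<le> d^2 + K / real (Suc k)"
      unfolding K_def by (intro add_left_mono divide_right_mono) (auto simp: field_simps)
    finally show ?thesis .
  qed
  have mid: "(norm (m p + m q))^2 \<ge> 4 * d^2" for p q
  proof -
    have "(1/2) *\<^sub>R (m p + m q) \<in> M" using mM[of p] mM[of q]
      by (simp add: M_def add scale)
    then have "d \<le> norm ((1/2) *\<^sub>R (m p + m q))" by (rule dle)
    then have "2*d \<le> norm (m p + m q)" by simp
    then have "(2*d)^2 \<le> (norm (m p + m q))^2" using d0 by (intro power_mono) auto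
    then show ?thesis by (simp add: power2_eq_square)
  qed
  have dist_m: "(norm (m p - m q))^2 \<le> 2*K / real (Suc p) + 2*K / real (Suc q)" for p q
    using parallelogram_le[of "m p" "m q"] msq[of p] msq[of q] mid[of p q] by linarith
  have "Cauchy m"
  proof (rule metric_CauchyI)
    fix \<epsilon> :: real assume "\<epsilon> > 0"
    obtain N where N: "4*K / \<epsilon>^2 < real N" using reals_Archimedean2 by blast
    have "4*K / real (Suc N) < \<epsilon>^2"
      using N \<open>\<epsilon> > 0\<close> K0 zero_less_power[of \<epsilon> 2] by (simp add: field_simps; linarith)
    show "\<exists>N. \<forall>p\<ge>N. \<forall>q\<ge>N. dist (m p) (m q) < \<epsilon>"
    proof (intro exI allI impI)
      fix p q assume p: "N \<le> p" and q: "N \<le> q"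
      have "2*K / real (Suc p) \<le> 2*K / real (Suc N)" using p K0
        by (intro divide_left_mono) auto
      moreover have "2*K / real (Suc q) \<le> 2*K / real (Suc N)" using q K0
        by (intro divide_left_mono) auto
      ultimately have "(norm (m p - m q))^2 < \<epsilon>^2"
        using dist_m[of p q] \<open>4*K / real (Suc N) < \<epsilon>^2\<close>
          add_divide_distrib[of "2*K" "2*K" "real (Suc N)", symmetric] by linarith
      then have "norm (m p - m q) < \<epsilon>"
        by (rule power2_less_imp_less[OF _ less_imp_le[OF \<open>\<epsilon> > 0\<close>]])
      then show "dist (m p) (m q) < \<epsilon>" by (simp add: dist_norm)
    qed
  qed
  then obtain z0 where lim: "m \<longlonglongrightarrow> z0" using Cauchy_convergent_iff convergent_def by blast
  have "(\<lambda>k. \<phi> (m k)) \<longlonglongrightarrow> \<phi> z0" using lim by (rule tendsto)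
  moreover have "(\<lambda>k. \<phi> (m k)) = (\<lambda>k. 1)" using mM by (auto simp: M_def)
  ultimately have "(\<lambda>k. 1::real) \<longlonglongrightarrow> \<phi> z0" by simp
  then have z0M: "\<phi> z0 = 1" by (rule LIMSEQ_unique[OF _ tendsto_const])
  have "(\<lambda>k. d + 1 / real (Suc k)) \<longlonglongrightarrow> d + 0"
    by (rule tendsto_add[OF tendsto_const LIMSEQ_inverse_real_of_nat[unfolded inverse_eq_divide]])
  then have "norm z0 \<le> d"
    using mn by (intro LIMSEQ_le[OF tendsto_norm[OF lim]]) (auto intro: less_imp_le)
  then have zmin: "norm z0 \<le> norm y" if "\<phi> y = 1" for y using dle[of y] that M_def by auto
  have orth: "inner z0 n = 0" if "\<phi> n = 0" for n
  proof (cases "n = 0")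
    case True then show ?thesis by simp
  next
    case False
    define t where "t = - inner z0 n / inner n n"
    have nn: "inner n n > 0" using False by simp
    have "\<phi> (z0 + t *\<^sub>R n) = 1" using z0M that by (simp add: add scale)
    then have "norm z0 \<le> norm (z0 + t *\<^sub>R n)" by (rule zmin)
    then have "(norm z0)^2 \<le> (norm (z0 + t *\<^sub>R n))^2" by (intro power_mono) auto
    then have "inner z0 z0 \<le> inner z0 z0 + 2 * t * inner z0 n + t^2 * inner n n"
      unfolding power2_norm_eq_inner
      by (simp add: inner_add_left inner_add_right inner_commute power2_eq_square algebra_simps)
    then have "0 \<le> 2 * t * inner z0 n + t * t * inner n n" by (simp add: power2_eq_square)
    also have "2 * t * inner z0 n + t * t * inner n n = - (inner z0 n * inner z0 n) / inner n n"
      using nn by (simp add: t_def field_simps)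
    finally have "inner z0 n * inner z0 n \<le> 0" using nn
      by (simp add: field_simps)
    then show ?thesis by (auto simp: mult_le_0_iff)
  qed
  have z00: "inner z0 z0 > 0" using z0M by (cases "z0 = 0") (auto simp: zero)
  show ?thesis
  proof (intro exI allI)
    fix x
    have "\<phi> (x - \<phi> x *\<^sub>R z0) = 0" using z0M by (simp add: diff scale)
    then have "inner z0 (x - \<phi> x *\<^sub>R z0) = 0" by (rule orth)
    then have "inner x z0 = \<phi> x * inner z0 z0"
      by (simp add: inner_diff_right inner_commute)
    then show "\<phi> x = inner x ((1 / inner z0 z0) *\<^sub>R z0)"
      using z00 by (simp add: field_simps)
  qed
qed


definition adjf :: "('h::{real_inner,complete_space} \<Rightarrow>\<^sub>L 'h) \<Rightarrow> 'h \<Rightarrow> 'h" where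
  "adjf T y = (SOME z. \<forall>x. inner (T x) y = inner x z)"

lemma adjf:
  fixes T :: "'h::{real_inner,complete_space} \<Rightarrow>\<^sub>L 'h"
  shows "inner (T x) y = inner x (adjf T y)"
proof -
  have "bounded_linear (\<lambda>x. inner (T x) y)"
    by (intro bounded_linear_compose[OF bounded_linear_inner_left] blinfun.bounded_linear_right)
  from riesz[OF this] have "\<exists>z. \<forall>x. inner (T x) y = inner x z" by blast
  then show ?thesis unfolding adjf_def by (rule someI_ex[THEN spec])
qed

lemma inner_unique:
  fixes a b :: "'h::real_inner"
  assumes "\<And>x. inner x a = inner x b" shows "a = b"
proof -
  have "inner (a - b) (a - b) = 0" using assms[of "a - b"] by (simp add: inner_diff_right)
  then show ?thesis by simp
qed

lemma adjf_add:
  fixes T :: "'h::{real_inner,complete_space} \<Rightarrow>\<^sub>L 'h"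
  shows "adjf T (x + y) = adjf T x + adjf T y"
    by (rule inner_unique) (simp add: adjf[symmetric] inner_add_right)

lemma adjf_norm:
  fixes T :: "'h::{real_inner,complete_space} \<Rightarrow>\<^sub>L 'h"
  shows "norm (adjf T x) \<le> norm x * norm T"
  proof (cases "adjf T x = 0")
    case True then show ?thesis by simp
  next
    case False
    let ?a = "adjf T x"
    have "norm ?a * norm ?a = inner (T ?a) x"
      by (simp add: adjf power2_norm_eq_inner[symmetric] power2_eq_square)
    also have "\<dots> \<le> norm (T ?a) * norm x" by (rule norm_cauchy_schwarz)
    also have "\<dots> \<le> (norm T * norm ?a) * norm x"
      by (intro mult_right_mono norm_blinfun) auto
    finally have "norm ?a * norm ?a \<le> (norm x * norm T) * norm ?a" by (simp add: ac_simps)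
    then show ?thesis using False by simp
  qed

lemma adjf_bl:
  fixes T :: "'h::{real_inner,complete_space} \<Rightarrow>\<^sub>L 'h"
  shows "bounded_linear (adjf T)"
proof (rule bounded_linear_intro[where K="norm T"])
  show "adjf T (x + y) = adjf T x + adjf T y" for x y by (rule adjf_add)
  show "adjf T (r *\<^sub>R x) = r *\<^sub>R adjf T x" for r x
    by (rule inner_unique) (simp add: adjf[symmetric])
  show "norm (adjf T x) \<le> norm x * norm T" for x by (rule adjf_norm)
qed

definition adj :: "('h::{real_inner,complete_space} \<Rightarrow>\<^sub>L 'h) \<Rightarrow> ('h \<Rightarrow>\<^sub>L 'h)" where
  "adj T = Blinfun (adjf T)"

lemma adj_apply:
  fixes S T :: "'h::{real_inner,complete_space} \<Rightarrow>\<^sub>L 'h"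
  shows "blinfun_apply (adj T) = adjf T"
  unfolding adj_def by (rule bounded_linear_Blinfun_apply[OF adjf_bl])

lemma adj_inner:
  fixes S T :: "'h::{real_inner,complete_space} \<Rightarrow>\<^sub>L 'h"
  shows "inner (T x) y = inner x (adj T y)"
  by (simp add: adj_apply adjf)

lemma adj_adj:
  fixes S T :: "'h::{real_inner,complete_space} \<Rightarrow>\<^sub>L 'h"
  shows "adj (adj T) = T"
proof (rule blinfun_eqI, rule inner_unique)
  fix i x
  have "inner x (adj (adj T) i) = inner (adj T x) i" by (simp only: adj_inner)
  also have "\<dots> = inner i (adj T x)" by (simp add: inner_commute)
  also have "\<dots> = inner (T i) x" by (simp only: adj_inner)
  finally show "inner x (adj (adj T) i) = inner x (T i)" by (simp add: inner_commute)
qed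

lemma adj_compose:
  fixes S T :: "'h::{real_inner,complete_space} \<Rightarrow>\<^sub>L 'h"
  shows "adj (S o\<^sub>L T) = adj T o\<^sub>L adj S"
proof (rule blinfun_eqI, rule inner_unique)
  fix i x
  have "inner x (adj (S o\<^sub>L T) i) = inner (S (T x)) i" by (simp add: adj_inner[symmetric])
  also have "\<dots> = inner x (adj T (adj S i))" by (simp only: adj_inner)
  finally show "inner x (adj (S o\<^sub>L T) i) = inner x ((adj T o\<^sub>L adj S) i)" by simp
qed

lemma adj_diff:
  fixes S T :: "'h::{real_inner,complete_space} \<Rightarrow>\<^sub>L 'h"
  shows "adj (S - T) = adj S - adj T"
proof (rule blinfun_eqI, rule inner_unique)
  fix i x
  have "inner x (adj (S - T) i) = inner (S x - T x) i" by (simp add: adj_inner[symmetric] blinfun.diff_left)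
  also have "\<dots> = inner x (adj S i) - inner x (adj T i)" by (simp only: inner_diff_left adj_inner)
  finally show "inner x (adj (S - T) i) = inner x ((adj S - adj T) i)"
    by (simp add: blinfun.diff_left inner_diff_right)
qed

lemma norm_adj_le:
  fixes S T :: "'h::{real_inner,complete_space} \<Rightarrow>\<^sub>L 'h"
  shows "norm (adj T) \<le> norm T"
proof (rule norm_blinfun_bound)
  show "0 \<le> norm T" by simp
  show "norm (adj T x) \<le> norm T * norm x" for x
    using adjf_norm[of T x] by (simp add: adj_apply mult.commute)
qed


lemma vecV:
  fixes E T P :: "'h::{real_inner,complete_space} \<Rightarrow>\<^sub>L 'h"
  assumes nE: "norm E \<le> 1" and nT: "norm T \<le> 1" and nP: "norm P \<le> 1"
    and dP: "norm ((E o\<^sub>L P) - P) \<le> \<delta>" and gT: "norm ((E o\<^sub>L T) - E) \<le> \<gamma>" and s: "s > 0"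
  shows "(norm (T (P \<xi>) - P \<xi>))^2 \<le> 2*(2* s + \<delta>/s + \<gamma>) * (norm \<xi>)^2"
proof -
  define \<eta> where "\<eta> = P \<xi>"
  define w where "w = \<eta> - T \<eta>"
  define n where "n = norm \<xi>"
  have n0: "0 \<le> n" by (simp add: n_def)
  have contr: "norm (X u) \<le> norm u" if "norm X \<le> 1" for X :: "'h \<Rightarrow>\<^sub>L 'h" and u
  proof -
    have "norm (X u) \<le> norm X * norm u" by (rule norm_blinfun)
    also have "\<dots> \<le> 1 * norm u" by (intro mult_right_mono that) auto
    finally show ?thesis by simp
  qed
  have h\<eta>: "norm \<eta> \<le> n" unfolding \<eta>_def n_def by (rule contr[OF nP])
  have hT\<eta>: "norm (T \<eta>) \<le> norm \<eta>" by (rule contr[OF nT])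
  have hE\<eta>: "norm (E \<eta>) \<le> norm \<eta>" by (rule contr[OF nE])
  have b: "(norm (T \<eta> - \<eta>))^2 \<le> 2 * inner w \<eta>"
  proof -
    have "(norm (T \<eta>))^2 \<le> (norm \<eta>)^2" using hT\<eta> by (intro power_mono) auto
    then show ?thesis unfolding w_def power2_norm_eq_inner
      by (simp add: inner_diff_left inner_diff_right inner_commute)
  qed
  have c: "2* s*(inner w \<eta> - inner (E w) (E \<eta>)) \<le> s^2 * (norm w)^2 + ((norm \<eta>)^2 - (norm (E \<eta>))^2)"
  proof -
    have "(norm (E (s *\<^sub>R w - \<eta>)))^2 \<le> (norm (s *\<^sub>R w - \<eta>))^2"
      using contr[OF nE] by (intro power_mono) auto
    moreover have "E (s *\<^sub>R w - \<eta>) = s *\<^sub>R E w - E \<eta>"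
      by (simp add: blinfun.diff_right blinfun.scaleR_right)
    moreover have "0 \<le> s * (s * inner (E w) (E w))" using s by (intro mult_nonneg_nonneg) auto
    ultimately show ?thesis unfolding power2_norm_eq_inner
      by (simp add: inner_diff_left inner_diff_right inner_commute power2_eq_square algebra_simps; linarith)
  qed
  have d: "(norm \<eta>)^2 - (norm (E \<eta>))^2 \<le> 2 * \<delta> * n^2"
  proof -
    have "((E o\<^sub>L P) - P) \<xi> = E \<eta> - \<eta>"
      unfolding \<eta>_def by (simp only: blinfun.diff_left blinfun_apply_blinfun_compose)
    then have "norm (E \<eta> - \<eta>) = norm (((E o\<^sub>L P) - P) \<xi>)" by simp
    also have "\<dots> \<le> norm ((E o\<^sub>L P) - P) * n" unfolding n_def by (rule norm_blinfun)
    also have "\<dots> \<le> \<delta> * n" using dP n0 by (rule mult_right_mono)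
    finally have "norm (E \<eta> - \<eta>) \<le> \<delta> * n" .
    moreover have "norm \<eta> - norm (E \<eta>) \<le> norm (E \<eta> - \<eta>)"
      by (metis norm_minus_commute norm_triangle_ineq2)
    ultimately have 1: "norm \<eta> - norm (E \<eta>) \<le> \<delta> * n" by linarith
    have 2: "norm \<eta> + norm (E \<eta>) \<le> 2 * n" using h\<eta> hE\<eta> by linarith
    have 3: "0 \<le> norm \<eta> - norm (E \<eta>)" using hE\<eta> by linarith
    have "(norm \<eta>)^2 - (norm (E \<eta>))^2 = (norm \<eta> - norm (E \<eta>)) * (norm \<eta> + norm (E \<eta>))"
      by (simp add: power2_eq_square algebra_simps)
    also have "\<dots> \<le> (\<delta> * n) * (2 * n)"
      using 1 2 3 by (intro mult_mono) auto
    finally show ?thesis by (simp add: power2_eq_square)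
  qed
  have a: "(norm w)^2 \<le> 4 * n^2"
  proof -
    have "norm w \<le> norm \<eta> + norm (T \<eta>)" unfolding w_def by (rule norm_triangle_ineq4)
    also have "\<dots> \<le> 2 * n" using h\<eta> hT\<eta> by linarith
    finally have "(norm w)^2 \<le> (2*n)^2" by (intro power_mono) auto
    then show ?thesis by (simp add: power2_eq_square)
  qed
  have e: "inner (E w) (E \<eta>) \<le> \<gamma> * n^2"
  proof -
    have "((E o\<^sub>L T) - E) \<eta> = E (T \<eta>) - E \<eta>"
      by (simp only: blinfun.diff_left blinfun_apply_blinfun_compose)
    then have "E w = - (((E o\<^sub>L T) - E) \<eta>)" by (simp add: w_def blinfun.diff_right)
    then have "norm (E w) = norm (((E o\<^sub>L T) - E) \<eta>)" by simp
    also have "\<dots> \<le> norm ((E o\<^sub>L T) - E) * norm \<eta>" by (rule norm_blinfun)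
    also have "\<dots> \<le> \<gamma> * n" using gT h\<eta> by (intro mult_mono) (auto intro: order_trans[OF norm_ge_zero])
    finally have 1: "norm (E w) \<le> \<gamma> * n" .
    have "inner (E w) (E \<eta>) \<le> norm (E w) * norm (E \<eta>)" by (rule norm_cauchy_schwarz)
    also have "\<dots> \<le> (\<gamma> * n) * n" using 1 hE\<eta> h\<eta> by (intro mult_mono) (auto intro: order_trans[OF norm_ge_zero])
    finally show ?thesis by (simp add: power2_eq_square)
  qed
  have "2* s*inner w \<eta> \<le> 2* s*(\<gamma> * n^2) + s^2 * (4 * n^2) + 2 * \<delta> * n^2"
  proof -
    have "2* s*inner (E w) (E \<eta>) \<le> 2* s*(\<gamma> * n^2)" using e s by simp
    moreover have "s^2 * (norm w)^2 \<le> s^2 * (4 * n^2)" using a by (intro mult_left_mono) auto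
    ultimately show ?thesis using c d by (simp add: algebra_simps)
  qed
  then have "inner w \<eta> \<le> (2* s + \<delta>/s + \<gamma>) * n^2"
    using s by (simp add: field_simps power2_eq_square)
  then have "2 * inner w \<eta> \<le> 2 * ((2* s + \<delta>/s + \<gamma>) * n^2)" by simp
  then have "(norm (T \<eta> - \<eta>))^2 \<le> 2*(2* s + \<delta>/s + \<gamma>) * n^2"
    using b by (simp only: mult.assoc)
  then show ?thesis unfolding n_def \<eta>_def .
qed


lemma core_R:
  fixes e :: "'i \<Rightarrow> ('h::{real_inner,complete_space} \<Rightarrow>\<^sub>L 'h)" and f :: "'j \<Rightarrow> ('h \<Rightarrow>\<^sub>L 'h)"
  assumes F: "F \<noteq> bot" and ne: "\<forall>i. norm (e i) \<le> 1" and nf: "\<forall>k. norm (f k) \<le> 1"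
    and ef: "\<forall>i. ((\<lambda>k. e i o\<^sub>L f k) \<longlongrightarrow> e i) G"
    and ee: "((\<lambda>i. e i o\<^sub>L e j) \<longlongrightarrow> e j) F"
  shows "((\<lambda>k. f k o\<^sub>L e j) \<longlongrightarrow> e j) G"
proof (rule tendstoI)
  fix \<epsilon> :: real assume ep: "\<epsilon> > 0"
  define s where "s = \<epsilon>^2 / 16"
  define \<delta> where "\<delta> = s * \<epsilon>^2 / 8"
  define \<gamma> where "\<gamma> = \<epsilon>^2 / 8"
  have s0: "s > 0" using ep by (simp add: s_def)
  have d0: "\<delta> > 0" using ep s0 by (simp add: \<delta>_def)
  have g0: "\<gamma> > 0" using ep by (simp add: \<gamma>_def)
  have "eventually (\<lambda>i. dist (e i o\<^sub>L e j) (e j) < \<delta>) F" using ee d0 by (rule tendstoD)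
  then obtain i where i: "dist (e i o\<^sub>L e j) (e j) < \<delta>" using F eventually_happens by blast
  have "eventually (\<lambda>k. dist (e i o\<^sub>L f k) (e i) < \<gamma>) G" using ef[rule_format, of i] g0 by (rule tendstoD)
  then show "eventually (\<lambda>k. dist (f k o\<^sub>L e j) (e j) < \<epsilon>) G"
  proof (rule eventually_mono)
    fix k assume k: "dist (e i o\<^sub>L f k) (e i) < \<gamma>"
    have eq: "2*(2* s + \<delta>/s + \<gamma>) = 3/4 * \<epsilon>^2"
      using s0 by (simp add: \<delta>_def \<gamma>_def s_def field_simps)
    have bnd: "norm (((f k o\<^sub>L e j) - e j) \<xi>) \<le> (9/10 * \<epsilon>) * norm \<xi>" for \<xi>
    proof -
      have "(norm (f k (e j \<xi>) - e j \<xi>))^2 \<le> 2*(2* s + \<delta>/s + \<gamma>) * (norm \<xi>)^2"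
        using ne nf i k s0
        by (intro vecV[of "e i" "f k" "e j"]) (auto simp: dist_norm less_imp_le)
      also have "\<dots> = 3/4 * (\<epsilon>^2 * (norm \<xi>)^2)" unfolding eq by simp
      also have "\<dots> \<le> 81/100 * (\<epsilon>^2 * (norm \<xi>)^2)" by (rule mult_right_mono) auto
      also have "\<dots> = ((9/10 * \<epsilon>) * norm \<xi>)^2" by (simp add: power_mult_distrib power2_eq_square)
      finally have "(norm (f k (e j \<xi>) - e j \<xi>))^2 \<le> ((9/10 * \<epsilon>) * norm \<xi>)^2" .
      then have "norm (f k (e j \<xi>) - e j \<xi>) \<le> (9/10 * \<epsilon>) * norm \<xi>"
        by (rule power2_le_imp_le) (use ep in simp)
      moreover have "((f k o\<^sub>L e j) - e j) \<xi> = f k (e j \<xi>) - e j \<xi>"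
        by (simp only: blinfun.diff_left blinfun_apply_blinfun_compose)
      ultimately show ?thesis by simp
    qed
    have "norm ((f k o\<^sub>L e j) - e j) \<le> 9/10 * \<epsilon>"
      by (rule norm_blinfun_bound) (use ep bnd in auto)
    then show "dist (f k o\<^sub>L e j) (e j) < \<epsilon>" using ep by (simp add: dist_norm)
  qed
qed


lemma adj_tendsto:
  fixes X :: "'j \<Rightarrow> ('h::{real_inner,complete_space} \<Rightarrow>\<^sub>L 'h)"
  assumes "(X \<longlongrightarrow> Y) G"
  shows "((\<lambda>k. adj (X k)) \<longlongrightarrow> adj Y) G"
proof (rule tendstoI)
  fix \<epsilon> :: real assume "\<epsilon> > 0"
  with assms have "eventually (\<lambda>k. dist (X k) Y < \<epsilon>) G" by (rule tendstoD)
  then show "eventually (\<lambda>k. dist (adj (X k)) (adj Y) < \<epsilon>) G"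
  proof (rule eventually_mono)
    fix k assume "dist (X k) Y < \<epsilon>"
    moreover have "norm (adj (X k - Y)) \<le> norm (X k - Y)" by (rule norm_adj_le)
    ultimately show "dist (adj (X k)) (adj Y) < \<epsilon>" by (simp add: dist_norm adj_diff)
  qed
qed

lemma core_L:
  fixes e :: "'i \<Rightarrow> ('h::{real_inner,complete_space} \<Rightarrow>\<^sub>L 'h)" and f :: "'j \<Rightarrow> ('h \<Rightarrow>\<^sub>L 'h)"
  assumes F: "F \<noteq> bot" and ne: "\<forall>i. norm (e i) \<le> 1" and nf: "\<forall>k. norm (f k) \<le> 1"
    and fe: "\<forall>i. ((\<lambda>k. f k o\<^sub>L e i) \<longlongrightarrow> e i) G"
    and ee: "((\<lambda>i. e j o\<^sub>L e i) \<longlongrightarrow> e j) F"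
  shows "((\<lambda>k. e j o\<^sub>L f k) \<longlongrightarrow> e j) G"
proof -
  have "((\<lambda>k. adj (f k) o\<^sub>L adj (e j)) \<longlongrightarrow> adj (e j)) G"
  proof (rule core_R[where e="\<lambda>i. adj (e i)" and f="\<lambda>k. adj (f k)" and F=F])
    show "F \<noteq> bot" by (rule F)
    show "\<forall>i. norm (adj (e i)) \<le> 1" using ne by (blast intro: order_trans[OF norm_adj_le])
    show "\<forall>k. norm (adj (f k)) \<le> 1" using nf by (blast intro: order_trans[OF norm_adj_le])
    show "\<forall>i. ((\<lambda>k. adj (e i) o\<^sub>L adj (f k)) \<longlongrightarrow> adj (e i)) G"
      using fe by (auto simp: adj_compose[symmetric] intro: adj_tendsto)
    show "((\<lambda>i. adj (e i) o\<^sub>L adj (e j)) \<longlongrightarrow> adj (e j)) F"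
      using ee by (auto simp: adj_compose[symmetric] intro: adj_tendsto)
  qed
  then have "((\<lambda>k. adj (adj (f k) o\<^sub>L adj (e j))) \<longlongrightarrow> adj (adj (e j))) G"
    by (rule adj_tendsto)
  then show ?thesis by (simp add: adj_compose adj_adj)
qed



lemma comp_assoc_L: "(a o\<^sub>L b) o\<^sub>L c = a o\<^sub>L (b o\<^sub>L c)"
  by (rule blinfun_eqI) simp

lemma comp_add_right_L: "a o\<^sub>L (b + c) = (a o\<^sub>L b) + (a o\<^sub>L c)"
  by (rule blinfun_eqI) (simp add: blinfun.add_left blinfun.add_right)

lemma comp_add_left_L: "(b + c) o\<^sub>L a = (b o\<^sub>L a) + (c o\<^sub>L a)"
  by (rule blinfun_eqI) (simp add: blinfun.add_left blinfun.add_right)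

lemma comp_diff_right_L: "a o\<^sub>L (b - c) = (a o\<^sub>L b) - (a o\<^sub>L c)"
  by (rule blinfun_eqI) (simp add: blinfun.diff_left blinfun.diff_right)

lemma comp_diff_left_L: "(b - c) o\<^sub>L a = (b o\<^sub>L a) - (c o\<^sub>L a)"
  by (rule blinfun_eqI) (simp add: blinfun.diff_left blinfun.diff_right)

lemma comp_scale_right_L: "a o\<^sub>L (r *\<^sub>R b) = r *\<^sub>R (a o\<^sub>L b)"
  by (rule blinfun_eqI) (simp add: blinfun.scaleR_left blinfun.scaleR_right)

lemma comp_scale_left_L: "(r *\<^sub>R b) o\<^sub>L a = r *\<^sub>R (b o\<^sub>L a)"
  by (rule blinfun_eqI) (simp add: blinfun.scaleR_left blinfun.scaleR_right)

lemma net_approx: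
  fixes f :: "'j \<Rightarrow> ('h::real_normed_vector \<Rightarrow>\<^sub>L 'h)"
  assumes nf: "\<forall>k. norm (f k) \<le> 1"
    and ap: "\<forall>\<epsilon>>0. \<exists>y. norm (y - x) < \<epsilon> \<and> ((\<lambda>k. f k o\<^sub>L y) \<longlongrightarrow> y) G"
  shows "((\<lambda>k. f k o\<^sub>L x) \<longlongrightarrow> x) G"
proof (rule tendstoI)
  fix \<epsilon> :: real assume ep: "\<epsilon> > 0"
  then obtain y where y: "norm (y - x) < \<epsilon>/3" and ty: "((\<lambda>k. f k o\<^sub>L y) \<longlongrightarrow> y) G"
    using ap by (meson divide_pos_pos zero_less_numeral)
  have "eventually (\<lambda>k. dist (f k o\<^sub>L y) y < \<epsilon>/3) G" using ty ep by (intro tendstoD) auto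
  then show "eventually (\<lambda>k. dist (f k o\<^sub>L x) x < \<epsilon>) G"
  proof (rule eventually_mono)
    fix k assume k: "dist (f k o\<^sub>L y) y < \<epsilon>/3"
    have eq: "(f k o\<^sub>L x) - x = (f k o\<^sub>L (x - y)) + (((f k o\<^sub>L y) - y) + (y - x))"
      by (simp add: comp_diff_right_L)
    have "norm (f k o\<^sub>L (x - y)) \<le> norm (f k) * norm (x - y)" by (rule norm_blinfun_compose)
    also have "\<dots> \<le> 1 * norm (x - y)" using nf by (intro mult_right_mono) auto
    finally have 1: "norm (f k o\<^sub>L (x - y)) < \<epsilon>/3" using y by (simp add: norm_minus_commute)
    have "norm ((f k o\<^sub>L x) - x) \<le> norm (f k o\<^sub>L (x - y)) + (norm ((f k o\<^sub>L y) - y) + norm (y - x))"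
      unfolding eq by (meson add_left_mono norm_triangle_ineq order_trans)
    then show "dist (f k o\<^sub>L x) x < \<epsilon>" using 1 k y by (simp add: dist_norm)
  qed
qed

lemma net_approx_L:
  fixes f :: "'j \<Rightarrow> ('h::real_normed_vector \<Rightarrow>\<^sub>L 'h)"
  assumes nf: "\<forall>k. norm (f k) \<le> 1"
    and ap: "\<forall>\<epsilon>>0. \<exists>y. norm (y - x) < \<epsilon> \<and> ((\<lambda>k. y o\<^sub>L f k) \<longlongrightarrow> y) G"
  shows "((\<lambda>k. x o\<^sub>L f k) \<longlongrightarrow> x) G"
proof (rule tendstoI)
  fix \<epsilon> :: real assume ep: "\<epsilon> > 0"
  then obtain y where y: "norm (y - x) < \<epsilon>/3" and ty: "((\<lambda>k. y o\<^sub>L f k) \<longlongrightarrow> y) G"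
    using ap by (meson divide_pos_pos zero_less_numeral)
  have "eventually (\<lambda>k. dist (y o\<^sub>L f k) y < \<epsilon>/3) G" using ty ep by (intro tendstoD) auto
  then show "eventually (\<lambda>k. dist (x o\<^sub>L f k) x < \<epsilon>) G"
  proof (rule eventually_mono)
    fix k assume k: "dist (y o\<^sub>L f k) y < \<epsilon>/3"
    have eq: "(x o\<^sub>L f k) - x = ((x - y) o\<^sub>L f k) + (((y o\<^sub>L f k) - y) + (y - x))"
      by (simp add: comp_diff_left_L)
    have "norm ((x - y) o\<^sub>L f k) \<le> norm (x - y) * norm (f k)" by (rule norm_blinfun_compose)
    also have "\<dots> \<le> norm (x - y) * 1" using nf by (intro mult_left_mono) auto
    finally have 1: "norm ((x - y) o\<^sub>L f k) < \<epsilon>/3" using y by (simp add: norm_minus_commute)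
    have "norm ((x o\<^sub>L f k) - x) \<le> norm ((x - y) o\<^sub>L f k) + (norm ((y o\<^sub>L f k) - y) + norm (y - x))"
      unfolding eq by (meson add_left_mono norm_triangle_ineq order_trans)
    then show "dist (x o\<^sub>L f k) x < \<epsilon>" using 1 k y by (simp add: dist_norm)
  qed
qed


lemma cspan_sub:
  assumes "P \<subseteq> S" "csubspace J S"
  shows "cspan J P \<subseteq> S"
  unfolding cspan_def using assms unfolding csubspace_def
  by (intro span_minimal) auto

lemma in_setprod:
  assumes "x \<in> X" "y \<in> Y"
  shows "x o\<^sub>L y \<in> setprod J X Y"
proof -
  have "x o\<^sub>L y \<in> cspan J {x o\<^sub>L y | x y. x \<in> X \<and> y \<in> Y}"
    unfolding cspan_def using assms by (intro span_base) blast
  then show ?thesis unfolding setprod_def using closure_subset by blast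
qed

lemma setprod_sub:
  assumes "\<And>x y. x \<in> X \<Longrightarrow> y \<in> Y \<Longrightarrow> x o\<^sub>L y \<in> S" "csubspace J S" "closed S"
  shows "setprod J X Y \<subseteq> S"
  unfolding setprod_def using assms
  by (intro closure_minimal cspan_sub) auto

lemma lim_in_setprod:
  assumes "F \<noteq> bot" "((\<lambda>i. x i o\<^sub>L y i) \<longlongrightarrow> l) F" "\<And>i. x i \<in> X" "\<And>i. y i \<in> Y"
  shows "l \<in> setprod J X Y"
proof (rule Lim_in_closed_set[OF _ _ assms(1,2)])
  show "closed (setprod J X Y)" unfolding setprod_def by simp
  show "eventually (\<lambda>i. x i o\<^sub>L y i \<in> setprod J X Y) F"
    using assms(3,4) by (intro always_eventually allI in_setprod)
qed


lemma R_sub: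
  fixes e :: "'i \<Rightarrow> ('h::{real_inner,complete_space} \<Rightarrow>\<^sub>L 'h)" and f :: "'j \<Rightarrow> ('h \<Rightarrow>\<^sub>L 'h)"
  assumes pe: "propR A F e" and pf: "propR A G f"
  shows "RR A F e \<subseteq> RR A G f"
proof
  fix x assume "x \<in> RR A F e"
  then have xA: "x \<in> A" and xl: "((\<lambda>i. e i o\<^sub>L x) \<longlongrightarrow> x) F" by (auto simp: RR_def)
  have F: "F \<noteq> bot" and eA: "\<And>i. e i \<in> A" and ne: "\<forall>i. norm (e i) \<le> 1"
    and ee: "\<And>j. ((\<lambda>i. e i o\<^sub>L e j) \<longlongrightarrow> e j) F"
    using pe by (auto simp: propR_def right_cai_def)
  have nf: "\<forall>k. norm (f k) \<le> 1" and fr: "\<And>a. a \<in> A \<Longrightarrow> ((\<lambda>k. a o\<^sub>L f k) \<longlongrightarrow> a) G"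
    using pf by (auto simp: propR_def right_cai_def)
  have fe: "((\<lambda>k. f k o\<^sub>L e j) \<longlongrightarrow> e j) G" for j
    by (rule core_R[OF F ne nf]) (use fr eA ee in auto)
  have "((\<lambda>k. f k o\<^sub>L x) \<longlongrightarrow> x) G"
  proof (rule net_approx[OF nf], intro allI impI)
    fix \<epsilon> :: real assume "\<epsilon> > 0"
    with xl have "eventually (\<lambda>i. dist (e i o\<^sub>L x) x < \<epsilon>) F" by (rule tendstoD)
    then obtain j where j: "dist (e j o\<^sub>L x) x < \<epsilon>" using F eventually_happens by blast
    have "((\<lambda>k. (f k o\<^sub>L e j) o\<^sub>L x) \<longlongrightarrow> e j o\<^sub>L x) G"
      by (intro tendsto_intros fe)
    then have "((\<lambda>k. f k o\<^sub>L (e j o\<^sub>L x)) \<longlongrightarrow> e j o\<^sub>L x) G" by (simp add: comp_assoc_L)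
    then show "\<exists>y. norm (y - x) < \<epsilon> \<and> ((\<lambda>k. f k o\<^sub>L y) \<longlongrightarrow> y) G"
      using j by (auto simp: dist_norm)
  qed
  then show "x \<in> RR A G f" using xA by (simp add: RR_def)
qed

lemma L_sub:
  fixes e :: "'i \<Rightarrow> ('h::{real_inner,complete_space} \<Rightarrow>\<^sub>L 'h)" and f :: "'j \<Rightarrow> ('h \<Rightarrow>\<^sub>L 'h)"
  assumes pe: "propL A F e" and pf: "propL A G f"
  shows "LL A F e \<subseteq> LL A G f"
proof
  fix x assume "x \<in> LL A F e"
  then have xA: "x \<in> A" and xl: "((\<lambda>i. x o\<^sub>L e i) \<longlongrightarrow> x) F" by (auto simp: LL_def)
  have F: "F \<noteq> bot" and eA: "\<And>i. e i \<in> A" and ne: "\<forall>i. norm (e i) \<le> 1"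
    and ee: "\<And>j. ((\<lambda>i. e j o\<^sub>L e i) \<longlongrightarrow> e j) F"
    using pe by (auto simp: propL_def left_cai_def)
  have nf: "\<forall>k. norm (f k) \<le> 1" and fr: "\<And>a. a \<in> A \<Longrightarrow> ((\<lambda>k. f k o\<^sub>L a) \<longlongrightarrow> a) G"
    using pf by (auto simp: propL_def left_cai_def)
  have fe: "((\<lambda>k. e j o\<^sub>L f k) \<longlongrightarrow> e j) G" for j
    by (rule core_L[OF F ne nf]) (use fr eA ee in auto)
  have "((\<lambda>k. x o\<^sub>L f k) \<longlongrightarrow> x) G"
  proof (rule net_approx_L[OF nf], intro allI impI)
    fix \<epsilon> :: real assume "\<epsilon> > 0"
    with xl have "eventually (\<lambda>i. dist (x o\<^sub>L e i) x < \<epsilon>) F" by (rule tendstoD)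
    then obtain j where j: "dist (x o\<^sub>L e j) x < \<epsilon>" using F eventually_happens by blast
    have "((\<lambda>k. x o\<^sub>L (e j o\<^sub>L f k)) \<longlongrightarrow> x o\<^sub>L e j) G"
      by (intro tendsto_intros fe)
    then have "((\<lambda>k. (x o\<^sub>L e j) o\<^sub>L f k) \<longlongrightarrow> x o\<^sub>L e j) G" by (simp add: comp_assoc_L)
    then show "\<exists>y. norm (y - x) < \<epsilon> \<and> ((\<lambda>k. y o\<^sub>L f k) \<longlongrightarrow> y) G"
      using j by (auto simp: dist_norm)
  qed
  then show "x \<in> LL A G f" using xA by (simp add: LL_def)
qed


lemma R_part:
  fixes J :: "'h::{real_inner,complete_space} \<Rightarrow>\<^sub>L 'h"
    and A :: "('h \<Rightarrow>\<^sub>L 'h) set"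
    and F :: "'i filter" and e :: "'i \<Rightarrow> ('h \<Rightarrow>\<^sub>L 'h)"
  assumes oa: "operator_algebra J A" and pR: "propR A F e"
  shows "right_ideal J A (RR A F e) \<and> closed (RR A F e) \<and> operator_algebra J (RR A F e)
          \<and> (\<exists>(G :: ('h \<Rightarrow>\<^sub>L 'h) filter) f. two_sided_cai (RR A F e) G f)
          \<and> (\<forall>(G :: 'j filter) f. propR A G f \<longrightarrow> RR A G f = RR A F e)
          \<and> setprod J A (RR A F e) = A \<and> setprod J (RR A F e) A = RR A F e"
proof -
  define R where "R = RR A F e"
  have cs: "complex_structure J" and Acops: "A \<subseteq> cops J" and Asub: "subspace A"
    and AJ: "\<And>T. T \<in> A \<Longrightarrow> J o\<^sub>L T \<in> A" and Acl: "closed A"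
    and Amul: "\<And>S T. S \<in> A \<Longrightarrow> T \<in> A \<Longrightarrow> S o\<^sub>L T \<in> A"
    using oa by (auto simp: operator_algebra_def csubspace_def)
  have F: "F \<noteq> bot" and eA: "\<And>i. e i \<in> A" and ne: "\<forall>i. norm (e i) \<le> 1"
    and er: "\<And>a. a \<in> A \<Longrightarrow> ((\<lambda>i. a o\<^sub>L e i) \<longlongrightarrow> a) F"
    and ee: "\<And>j. ((\<lambda>i. e i o\<^sub>L e j) \<longlongrightarrow> e j) F"
    using pR by (auto simp: propR_def right_cai_def)
  have Rdef: "x \<in> R \<longleftrightarrow> x \<in> A \<and> ((\<lambda>i. e i o\<^sub>L x) \<longlongrightarrow> x) F" for x
    by (simp add: R_def RR_def)
  have eR: "e j \<in> R" for j using eA ee by (simp add: Rdef)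
  have RA: "R \<subseteq> A" using Rdef by blast
  have Rsub: "subspace R"
  proof (rule real_vector.subspaceI)
    show "0 \<in> R" using Asub by (simp add: Rdef real_vector.subspace_0)
    show "x + y \<in> R" if "x \<in> R" "y \<in> R" for x y
      using that Asub by (auto simp: Rdef comp_add_right_L real_vector.subspace_add intro: tendsto_add)
    show "c *\<^sub>R x \<in> R" if "x \<in> R" for c x
      using that Asub by (auto simp: Rdef comp_scale_right_L real_vector.subspace_scale intro: tendsto_scaleR)
  qed
  have RJ: "J o\<^sub>L x \<in> R" if "x \<in> R" for x
  proof -
    have "e i o\<^sub>L J = J o\<^sub>L e i" for i using eA Acops by (auto simp: cops_def)
    then have "e i o\<^sub>L (J o\<^sub>L x) = J o\<^sub>L (e i o\<^sub>L x)" for i by (metis comp_assoc_L)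
    moreover have "((\<lambda>i. J o\<^sub>L (e i o\<^sub>L x)) \<longlongrightarrow> J o\<^sub>L x) F"
      using that by (intro tendsto_intros) (simp add: Rdef)
    ultimately show ?thesis using that AJ by (simp add: Rdef)
  qed
  have Rcs: "csubspace J R" using Rsub RJ by (simp add: csubspace_def)
  have Rmul: "x o\<^sub>L a \<in> R" if "x \<in> R" "a \<in> A" for x a
  proof -
    have "((\<lambda>i. (e i o\<^sub>L x) o\<^sub>L a) \<longlongrightarrow> x o\<^sub>L a) F"
      using that by (intro tendsto_intros) (simp add: Rdef)
    then show ?thesis using that Amul by (simp add: Rdef comp_assoc_L)
  qed
  have ri: "right_ideal J A R" using RA Rcs Rmul by (simp add: right_ideal_def)
  have Rcl: "closed R"
    unfolding closure_subset_eq[symmetric]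
  proof
    fix x assume xc: "x \<in> closure R"
    then have ap: "\<forall>\<epsilon>>0. \<exists>y\<in>R. dist y x < \<epsilon>" by (simp add: closure_approachable)
    have "x \<in> A" using xc closure_mono[OF RA] Acl closure_closed by blast
    moreover have "((\<lambda>i. e i o\<^sub>L x) \<longlongrightarrow> x) F"
      using ap by (intro net_approx[OF ne]) (metis Rdef dist_norm)
    ultimately show "x \<in> R" by (simp add: Rdef)
  qed
  have Roa: "operator_algebra J R"
    using cs RA Acops Rcs Rcl Rmul by (auto simp: operator_algebra_def)
  have tcai: "\<exists>(G :: ('h \<Rightarrow>\<^sub>L 'h) filter) f. two_sided_cai R G f"
  proof (intro exI)
    define g where "g T = (if T \<in> range e then T else e undefined)" for T
    have ge: "g (e i) = e i" for i by (simp add: g_def)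
    have gR: "g T \<in> R \<and> norm (g T) \<le> 1" for T
      using eR ne by (auto simp: g_def)
    have G: "filtermap e F \<noteq> bot" using F by (simp add: filtermap_bot_iff)
    show "two_sided_cai R (filtermap e F) g"
      unfolding two_sided_cai_def right_cai_def left_cai_def filterlim_filtermap ge
      using G gR er RA Rdef by auto
  qed
  have indep: "\<forall>(G :: 'j filter) f. propR A G f \<longrightarrow> RR A G f = R"
    unfolding R_def
  proof (intro allI impI)
    fix G :: "'j filter" and f assume "propR A G f"
    then show "RR A G f = RR A F e" using R_sub[OF pR] R_sub[OF _ pR] by (intro equalityI)
  qed
  have sp1: "setprod J A R = A"
  proof
    show "setprod J A R \<subseteq> A"
      using oa RA by (intro setprod_sub) (auto simp: operator_algebra_def intro: Amul)
    show "A \<subseteq> setprod J A R"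
    proof
      fix a assume "a \<in> A"
      then show "a \<in> setprod J A R"
        by (intro lim_in_setprod[OF F er[OF \<open>a \<in> A\<close>]]) (auto intro: eR)
    qed
  qed
  have sp2: "setprod J R A = R"
  proof
    show "setprod J R A \<subseteq> R" using Rmul Rcs Rcl by (intro setprod_sub) auto
    show "R \<subseteq> setprod J R A"
    proof
      fix r assume "r \<in> R"
      then show "r \<in> setprod J R A" using RA
        by (intro lim_in_setprod[OF F er]) (auto intro: eA)
    qed
  qed
  show ?thesis using ri Rcl Roa tcai indep sp1 sp2 unfolding R_def by blast
qed


lemma L_part:
  fixes J :: "'h::{real_inner,complete_space} \<Rightarrow>\<^sub>L 'h"
    and A :: "('h \<Rightarrow>\<^sub>L 'h) set"
    and F :: "'i filter" and e :: "'i \<Rightarrow> ('h \<Rightarrow>\<^sub>L 'h)"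
  assumes oa: "operator_algebra J A" and pL: "propL A F e"
  shows "left_ideal J A (LL A F e) \<and> closed (LL A F e) \<and> operator_algebra J (LL A F e)
          \<and> (\<exists>(G :: ('h \<Rightarrow>\<^sub>L 'h) filter) f. two_sided_cai (LL A F e) G f)
          \<and> (\<forall>(G :: 'j filter) f. propL A G f \<longrightarrow> LL A G f = LL A F e)
          \<and> setprod J (LL A F e) A = A \<and> setprod J A (LL A F e) = LL A F e"
proof -
  define R where "R = LL A F e"
  have cs: "complex_structure J" and Acops: "A \<subseteq> cops J" and Asub: "subspace A"
    and AJ: "\<And>T. T \<in> A \<Longrightarrow> J o\<^sub>L T \<in> A" and Acl: "closed A"
    and Amul: "\<And>S T. S \<in> A \<Longrightarrow> T \<in> A \<Longrightarrow> S o\<^sub>L T \<in> A"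
    using oa by (auto simp: operator_algebra_def csubspace_def)
  have F: "F \<noteq> bot" and eA: "\<And>i. e i \<in> A" and ne: "\<forall>i. norm (e i) \<le> 1"
    and er: "\<And>a. a \<in> A \<Longrightarrow> ((\<lambda>i. e i o\<^sub>L a) \<longlongrightarrow> a) F"
    and ee: "\<And>j. ((\<lambda>i. e j o\<^sub>L e i) \<longlongrightarrow> e j) F"
    using pL by (auto simp: propL_def left_cai_def)
  have Rdef: "x \<in> R \<longleftrightarrow> x \<in> A \<and> ((\<lambda>i. x o\<^sub>L e i) \<longlongrightarrow> x) F" for x
    by (simp add: R_def LL_def)
  have eR: "e j \<in> R" for j using eA ee by (simp add: Rdef)
  have RA: "R \<subseteq> A" using Rdef by blast
  have Rsub: "subspace R"
  proof (rule real_vector.subspaceI)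
    show "0 \<in> R" using Asub by (simp add: Rdef real_vector.subspace_0)
    show "x + y \<in> R" if "x \<in> R" "y \<in> R" for x y
      using that Asub by (auto simp: Rdef comp_add_left_L real_vector.subspace_add intro: tendsto_add)
    show "c *\<^sub>R x \<in> R" if "x \<in> R" for c x
      using that Asub by (auto simp: Rdef comp_scale_left_L real_vector.subspace_scale intro: tendsto_scaleR)
  qed
  have RJ: "J o\<^sub>L x \<in> R" if "x \<in> R" for x
  proof -
    have "((\<lambda>i. J o\<^sub>L (x o\<^sub>L e i)) \<longlongrightarrow> J o\<^sub>L x) F"
      using that by (intro tendsto_intros) (simp add: Rdef)
    then show ?thesis using that AJ by (simp add: Rdef comp_assoc_L)
  qed
  have Rcs: "csubspace J R" using Rsub RJ by (simp add: csubspace_def)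
  have Rmul: "a o\<^sub>L x \<in> R" if "x \<in> R" "a \<in> A" for x a
  proof -
    have "((\<lambda>i. a o\<^sub>L (x o\<^sub>L e i)) \<longlongrightarrow> a o\<^sub>L x) F"
      using that by (intro tendsto_intros) (simp add: Rdef)
    then show ?thesis using that Amul RA by (auto simp: Rdef comp_assoc_L)
  qed
  have li: "left_ideal J A R" using RA Rcs Rmul by (simp add: left_ideal_def)
  have Rcl: "closed R"
    unfolding closure_subset_eq[symmetric]
  proof
    fix x assume xc: "x \<in> closure R"
    then have ap: "\<forall>\<epsilon>>0. \<exists>y\<in>R. dist y x < \<epsilon>" by (simp add: closure_approachable)
    have "x \<in> A" using xc closure_mono[OF RA] Acl closure_closed by blast
    moreover have "((\<lambda>i. x o\<^sub>L e i) \<longlongrightarrow> x) F"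
      using ap by (intro net_approx_L[OF ne]) (metis Rdef dist_norm)
    ultimately show "x \<in> R" by (simp add: Rdef)
  qed
  have Roa: "operator_algebra J R"
    using cs RA Acops Rcs Rcl Rmul by (auto simp: operator_algebra_def)
  have tcai: "\<exists>(G :: ('h \<Rightarrow>\<^sub>L 'h) filter) f. two_sided_cai R G f"
  proof (intro exI)
    define g where "g T = (if T \<in> range e then T else e undefined)" for T
    have ge: "g (e i) = e i" for i by (simp add: g_def)
    have gR: "g T \<in> R \<and> norm (g T) \<le> 1" for T
      using eR ne by (auto simp: g_def)
    have G: "filtermap e F \<noteq> bot" using F by (simp add: filtermap_bot_iff)
    show "two_sided_cai R (filtermap e F) g"
      unfolding two_sided_cai_def right_cai_def left_cai_def filterlim_filtermap ge
      using G gR er RA Rdef by auto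
  qed
  have indep: "\<forall>(G :: 'j filter) f. propL A G f \<longrightarrow> LL A G f = R"
    unfolding R_def
  proof (intro allI impI)
    fix G :: "'j filter" and f assume "propL A G f"
    then show "LL A G f = LL A F e" using L_sub[OF pL] L_sub[OF _ pL] by (intro equalityI)
  qed
  have sp1: "setprod J R A = A"
  proof
    show "setprod J R A \<subseteq> A"
      using oa RA by (intro setprod_sub) (auto simp: operator_algebra_def intro: Amul)
    show "A \<subseteq> setprod J R A"
    proof
      fix a assume "a \<in> A"
      then show "a \<in> setprod J R A"
        by (intro lim_in_setprod[OF F er[OF \<open>a \<in> A\<close>]]) (auto intro: eR)
    qed
  qed
  have sp2: "setprod J A R = R"
  proof
    show "setprod J A R \<subseteq> R" using Rmul Rcs Rcl by (intro setprod_sub) auto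
    show "R \<subseteq> setprod J A R"
    proof
      fix r assume "r \<in> R"
      then show "r \<in> setprod J A R" using RA
        by (intro lim_in_setprod[OF F er]) (auto intro: eA)
    qed
  qed
  show ?thesis using li Rcl Roa tcai indep sp1 sp2 unfolding R_def by blast
qed


theorem proposition2p3:
  fixes J :: "'h::{real_inner,complete_space} \<Rightarrow>\<^sub>L 'h"
    and A :: "('h \<Rightarrow>\<^sub>L 'h) set"
    and F :: "'i filter" and e :: "'i \<Rightarrow> ('h \<Rightarrow>\<^sub>L 'h)"
  assumes "operator_algebra J A"
  shows "(propR A F e \<longrightarrow>
            right_ideal J A (RR A F e) \<and> closed (RR A F e) \<and> operator_algebra J (RR A F e)
          \<and> (\<exists>(G :: ('h \<Rightarrow>\<^sub>L 'h) filter) f. two_sided_cai (RR A F e) G f)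
          \<and> (\<forall>(G :: 'j filter) f. propR A G f \<longrightarrow> RR A G f = RR A F e)
          \<and> setprod J A (RR A F e) = A \<and> setprod J (RR A F e) A = RR A F e)
       \<and> (propL A F e \<longrightarrow>
            left_ideal J A (LL A F e) \<and> closed (LL A F e) \<and> operator_algebra J (LL A F e)
          \<and> (\<exists>(G :: ('h \<Rightarrow>\<^sub>L 'h) filter) f. two_sided_cai (LL A F e) G f)
          \<and> (\<forall>(G :: 'j filter) f. propL A G f \<longrightarrow> LL A G f = LL A F e)
          \<and> setprod J (LL A F e) A = A \<and> setprod J A (LL A F e) = LL A F e)"
    using R_part[OF assms] L_part[OF assms] by blast

end
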